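(* Let $c_1,\dots,c_k\in(0,\infty)$ be fixed constants, and let $\lambda\in(0,\infty)^k$ be a tuning parameter satisfying, for every $j\in\{1,\dots,k\}$, $$\frac{\lambda_j}{2g'(\|Y-X\hat\beta^\lambda\|_2^2)}=c_j\,\|(XP_jM_j^{+})^\top\varepsilon\|_{q_j}^*$$ (such a $\lambda$ exists with probability one). Then, with probability one, for any minimizer $\hat\beta^\lambda$ of the objective below, $$\frac1n\|X(\beta^*-\hat\beta^\lambda)\|_2^2\le\inf_{u\in(0,1),\,\beta\in\mathbb{R}^p}\Big\{\frac{1}{4u(1-u)n}\|X(\beta^*-\beta)\|_2^2+\frac1n\sum_{j=1}^k\frac{1+c_j}{1-u}\|(XP_jM_j^{+})^\top\varepsilon\|_{q_j}^*\,\|M_j\beta\|_{q_j}-\frac1n\sum_{j=1}^k\frac{c_j-1}{1-u}\|(XP_jM_j^{+})^\top\varepsilon\|_{q_j}^*\,\|M_j\hat\beta^\lambda\|_{q_j}\Big\}.$$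
   Context: Standing setup. Model: $Y=X\beta^*+\varepsilon$ with $Y\in\mathbb{R}^n$, $X\in\mathbb{R}^{n\times p}$, $\beta^*\in\mathbb{R}^p$, $\varepsilon\in\mathbb{R}^n$ (random; no distributional assumptions beyond those below). Link function $g:\mathbb{R}\to[0,\infty)$ with $g(0)=0$, $g$ continuous and strictly increasing on $[0,\infty)$, continuously differentiable on $(0,\infty)$ with strictly positive and non-increasing derivative $g'$, and such that $\alpha\mapsto g(\|\alpha\|_2^2)$ is strictly convex on $\mathbb{R}^n$. Penalty: $k\ge1$, matrices $M_1,\dots,M_k\in\mathbb{R}^{p\times p}$ with $\bigcap_{j=1}^k\mathrm{Ker}(M_j)=\{0\}$, exponents $q_j\ge1$, $\|\cdot\|_{q_j}$ the $\ell_{q_j}$-norm on $\mathbb{R}^p$, and $\|\cdot\|_{q_j}^*$ its dual norm (the $\ell_{p_j}$-norm with $1/p_j+1/q_j=1$). For $\lambda\in(0,\infty)^k$, $\hat\beta^\lambda$ denotes any element of $\arg\min_{\beta\in\mathbb{R}^p}\{g(\|Y-X\beta\|_2^2)+\sum_{j=1}^k\lambda_j\|M_j\beta\|_{q_j}\}$. $A^+$ denotes the Moore–Penrose pseudoinverse; $P_1,\dots,P_k\in\mathbb{R}^{p\times p}$ are fixed projection matrices with $\sum_{j=1}^kP_jM_j^+M_j=I_{p\times p}$. Noise assumption: with probability one, $Y\neq0$ and $\min_{j}\|(XP_jM_j^{+})^\top\varepsilon\|_{q_j}^*>0$. *)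

theory Defs
  imports "HOL-Analysis.Analysis"
begin

definition strict_convex_on :: "'a::real_vector set \<Rightarrow> ('a \<Rightarrow> real) \<Rightarrow> bool" where
  "strict_convex_on S f \<longleftrightarrow> convex S \<and>
     (\<forall>x\<in>S. \<forall>y\<in>S. \<forall>t. x \<noteq> y \<longrightarrow> 0 < t \<longrightarrow> t < 1 \<longrightarrow>
        f ((1 - t) *\<^sub>R x + t *\<^sub>R y) < (1 - t) * f x + t * f y)"

definition lq_norm :: "real \<Rightarrow> real ^ 'p \<Rightarrow> real" where
  "lq_norm q x = (\<Sum>i\<in>UNIV. \<bar>x $ i\<bar> powr q) powr (1 / q)"

definition lq_dual_norm :: "real \<Rightarrow> real ^ 'p \<Rightarrow> real" where
  "lq_dual_norm q y = Sup {x \<bullet> y | x. lq_norm q x \<le> 1}"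

definition pinv :: "real ^ 'n ^ 'm \<Rightarrow> real ^ 'm ^ 'n" where
  "pinv A = (THE B. A ** B ** A = A \<and> B ** A ** B = B \<and>
                    transpose (A ** B) = A ** B \<and> transpose (B ** A) = B ** A)"

end

theory Submission
  imports Defs
begin

lemma lq_nonneg: "lq_norm q x \<ge> 0"
  by (simp add: lq_norm_def)

lemma lq_sum_nonneg: "(\<Sum>i\<in>UNIV. \<bar>(x::real^'p) $ i\<bar> powr q) \<ge> 0"
  by (simp add: sum_nonneg)

lemma lq_scale:
  assumes q: "q > 0"
  shows "lq_norm q (c *\<^sub>R x) = \<bar>c\<bar> * lq_norm q x"
proof -
  have "(\<Sum>i\<in>UNIV. \<bar>(c *\<^sub>R x) $ i\<bar> powr q) = \<bar>c\<bar> powr q * (\<Sum>i\<in>UNIV. \<bar>x $ i\<bar> powr q)"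
    by (simp add: abs_mult powr_mult sum_distrib_left)
  then have "lq_norm q (c *\<^sub>R x) = (\<bar>c\<bar> powr q) powr (1/q) * lq_norm q x"
    by (simp add: lq_norm_def powr_mult sum_nonneg)
  also have "(\<bar>c\<bar> powr q) powr (1/q) = \<bar>c\<bar>"
    using q by (simp add: powr_powr)
  finally show ?thesis .
qed

lemma lq_uminus: "lq_norm q (- x) = lq_norm q x"
  by (simp add: lq_norm_def)

lemma lq_zero:
  assumes q: "q > 0" and z: "lq_norm q x = 0"
  shows "x = 0"
proof -
  have "(\<Sum>i\<in>UNIV. \<bar>x $ i\<bar> powr q) = 0"
    using z by (simp add: lq_norm_def)
  then have "\<forall>i\<in>UNIV. \<bar>x $ i\<bar> powr q = 0"
    by (subst (asm) sum_nonneg_eq_0_iff) auto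
  then show ?thesis by (simp add: vec_eq_iff)
qed

lemma lq_pow:
  assumes q: "q > 0"
  shows "lq_norm q x powr q = (\<Sum>i\<in>UNIV. \<bar>x $ i\<bar> powr q)"
  using q by (simp add: lq_norm_def powr_powr sum_nonneg)

lemma lq_comp_le:
  assumes q: "q > 0"
  shows "\<bar>x $ i\<bar> \<le> lq_norm q x"
proof -
  have "\<bar>x $ i\<bar> powr q \<le> (\<Sum>i\<in>UNIV. \<bar>x $ i\<bar> powr q)"
    by (rule member_le_sum) auto
  then have "(\<bar>x $ i\<bar> powr q) powr (1/q) \<le> (\<Sum>i\<in>UNIV. \<bar>x $ i\<bar> powr q) powr (1/q)"
    using q by (intro powr_mono2) auto
  then show ?thesis using q by (simp add: powr_powr lq_norm_def)
qed

lemma powr_conv: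
  fixes x y t q :: real
  assumes "q \<ge> 1" "x \<ge> 0" "y \<ge> 0" "0 \<le> t" "t \<le> 1"
  shows "((1-t)*x + t*y) powr q \<le> (1-t) * x powr q + t * y powr q"
proof (cases "x > 0 \<and> y > 0")
  case True
  have "\<forall>x\<in>{0<..}. \<forall>y\<in>{0<..}. \<forall>u\<ge>0. \<forall>v\<ge>0. u + v = 1 \<longrightarrow>
      (u * x + v * y) powr q \<le> u * x powr q + v * y powr q"
    using powr_convex[OF assms(1)] unfolding convex_on_def by (simp add: mult.commute)
  then have "((1-t) * x + t * y) powr q \<le> (1-t) * x powr q + t * y powr q"
    using True assms by auto
  then show ?thesis .
next
  case False
  have tp: "s powr q \<le> s" if "0 \<le> s" "s \<le> 1" for s :: real
    using powr_mono'[of 1 q s] that assms(1) by (cases "s = 0") auto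
  from False have "x = 0 \<or> y = 0" using assms by auto
  then show ?thesis
  proof
    assume "x = 0"
    then have "((1-t)*x + t*y) powr q = t powr q * y powr q" using assms by (simp add: powr_mult)
    also have "\<dots> \<le> t * y powr q" using tp[of t] assms by (intro mult_right_mono) auto
    finally show ?thesis using \<open>x=0\<close> assms by simp
  next
    assume "y = 0"
    then have "((1-t)*x + t*y) powr q = (1-t) powr q * x powr q" using assms by (simp add: powr_mult)
    also have "\<dots> \<le> (1-t) * x powr q" using tp[of "1-t"] assms by (intro mult_right_mono) auto
    finally show ?thesis using \<open>y=0\<close> assms by simp
  qed
qed

lemma F_conv:
  fixes x y :: "real^'p"
  assumes "q \<ge> 1" "0 \<le> t" "t \<le> 1"
  shows "(\<Sum>i\<in>UNIV. \<bar>((1-t) *\<^sub>R x + t *\<^sub>R y) $ i\<bar> powr q)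
    \<le> (1-t) * (\<Sum>i\<in>UNIV. \<bar>x $ i\<bar> powr q) + t * (\<Sum>i\<in>UNIV. \<bar>y $ i\<bar> powr q)"
proof -
  have "\<bar>((1-t) *\<^sub>R x + t *\<^sub>R y) $ i\<bar> powr q \<le> (1-t) * \<bar>x $ i\<bar> powr q + t * \<bar>y $ i\<bar> powr q" for i
  proof -
    have "\<bar>((1-t) *\<^sub>R x + t *\<^sub>R y) $ i\<bar> \<le> (1-t) * \<bar>x $ i\<bar> + t * \<bar>y $ i\<bar>"
      using assms by (simp add: abs_triangle_ineq[THEN order_trans] abs_mult)
    then have "\<bar>((1-t) *\<^sub>R x + t *\<^sub>R y) $ i\<bar> powr q \<le> ((1-t) * \<bar>x $ i\<bar> + t * \<bar>y $ i\<bar>) powr q"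
      using assms by (intro powr_mono2) auto
    also have "\<dots> \<le> (1-t) * \<bar>x $ i\<bar> powr q + t * \<bar>y $ i\<bar> powr q"
      using assms by (intro powr_conv) auto
    finally show ?thesis .
  qed
  then have "(\<Sum>i\<in>UNIV. \<bar>((1-t) *\<^sub>R x + t *\<^sub>R y) $ i\<bar> powr q) \<le> (\<Sum>i\<in>UNIV. (1-t) * \<bar>x $ i\<bar> powr q + t * \<bar>y $ i\<bar> powr q)"
    by (rule sum_mono)
  then show ?thesis by (simp add: sum.distrib sum_distrib_left)
qed

lemma lq_triangle:
  fixes x y :: "real^'p"
  assumes q: "q \<ge> 1"
  shows "lq_norm q (x + y) \<le> lq_norm q x + lq_norm q y"
proof (cases "x = 0 \<or> y = 0")
  case True then show ?thesis using lq_nonneg by auto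
next
  case False
  define a where "a = lq_norm q x"
  define b where "b = lq_norm q y"
  have a: "a > 0" using False lq_zero[of q x] lq_nonneg[of q x] q unfolding a_def by force
  have b: "b > 0" using False lq_zero[of q y] lq_nonneg[of q y] q unfolding b_def by force
  define F where "F = (\<lambda>z::real^'p. \<Sum>i\<in>UNIV. \<bar>z $ i\<bar> powr q)"
  have FL: "F z = lq_norm q z powr q" for z
    unfolding F_def using lq_pow[of q z] q by simp
  have Fx: "F ((1/a) *\<^sub>R x) = 1"
  proof -
    have "F ((1/a) *\<^sub>R x) = lq_norm q ((1/a) *\<^sub>R x) powr q" by (rule FL)
    also have "\<dots> = 1" using lq_scale[of q "1/a" x] a q a_def by simp
    finally show ?thesis .
  qed
  have Fy: "F ((1/b) *\<^sub>R y) = 1"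
  proof -
    have "F ((1/b) *\<^sub>R y) = lq_norm q ((1/b) *\<^sub>R y) powr q" by (rule FL)
    also have "\<dots> = 1" using lq_scale[of q "1/b" y] b q b_def by simp
    finally show ?thesis .
  qed
  define t where "t = b / (a + b)"
  have t: "0 \<le> t" "t \<le> 1" using a b by (auto simp: t_def)
  have eq: "(1-t) *\<^sub>R ((1/a) *\<^sub>R x) + t *\<^sub>R ((1/b) *\<^sub>R y) = (1/(a+b)) *\<^sub>R (x + y)"
    using a b by (simp add: t_def field_simps scaleR_add_right)
  have c: "F ((1-t) *\<^sub>R ((1/a) *\<^sub>R x) + t *\<^sub>R ((1/b) *\<^sub>R y))
     \<le> (1-t) * F ((1/a) *\<^sub>R x) + t * F ((1/b) *\<^sub>R y)"
    unfolding F_def by (rule F_conv[OF q t])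
  have "F ((1/(a+b)) *\<^sub>R (x + y)) \<le> 1"
    unfolding eq[symmetric] using c Fx Fy by simp
  then have "lq_norm q ((1/(a+b)) *\<^sub>R (x + y)) powr q \<le> 1"
    using FL by simp
  then have "lq_norm q ((1/(a+b)) *\<^sub>R (x + y)) \<le> 1"
  proof -
    let ?z = "lq_norm q ((1/(a+b)) *\<^sub>R (x + y))"
    assume h: "?z powr q \<le> 1"
    have "(?z powr q) powr (1/q) \<le> 1 powr (1/q)"
      using h q by (intro powr_mono2) auto
    then show "?z \<le> 1" using q lq_nonneg[of q] by (simp add: powr_powr)
  qed
  then have "lq_norm q (x+y) / (a+b) \<le> 1"
    using lq_scale[of q "1/(a+b)" "x+y"] q a b by simp
  then show ?thesis using a b by (simp add: a_def b_def field_simps)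
qed

lemma lq_dual_ineq:
  fixes x y :: "real^'p"
  assumes q: "q > 0"
  shows "x \<bullet> y \<le> lq_dual_norm q y * lq_norm q x"
proof -
  have bdd: "bdd_above {x \<bullet> y | x. lq_norm q x \<le> 1}"
  proof (rule bdd_aboveI[where M = "\<Sum>i\<in>UNIV. \<bar>y $ i\<bar>"], clarify)
    fix z :: "real^'p" assume z: "lq_norm q z \<le> 1"
    have "z \<bullet> y = (\<Sum>i\<in>UNIV. z $ i * y $ i)" by (simp add: inner_vec_def)
    also have "\<dots> \<le> (\<Sum>i\<in>UNIV. \<bar>y $ i\<bar>)"
    proof (rule sum_mono)
      fix i
      have "\<bar>z $ i\<bar> \<le> 1" using lq_comp_le[OF q, of z i] z by simp
      then have "\<bar>z $ i * y $ i\<bar> \<le> \<bar>y $ i\<bar>"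
        by (simp add: abs_mult mult_left_le_one_le)
      then show "z $ i * y $ i \<le> \<bar>y $ i\<bar>" by simp
    qed
    finally show "z \<bullet> y \<le> (\<Sum>i\<in>UNIV. \<bar>y $ i\<bar>)" .
  qed
  show ?thesis
  proof (cases "x = 0")
    case True
    then show ?thesis by (simp add: lq_norm_def)
  next
    case False
    define a where "a = lq_norm q x"
    have a: "a > 0" using False lq_zero[OF q, of x] lq_nonneg[of q x] unfolding a_def by force
    have n1: "lq_norm q ((1/a) *\<^sub>R x) \<le> 1" using lq_scale[OF q, of "1/a" x] a a_def by simp
    have "((1/a) *\<^sub>R x) \<bullet> y \<le> lq_dual_norm q y"
      unfolding lq_dual_norm_def using n1 by (intro cSup_upper[OF _ bdd]) blast
    then have "(x \<bullet> y) / a \<le> lq_dual_norm q y" by simp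
    then show ?thesis using a a_def by (simp add: field_simps)
  qed
qed

lemma inner_transpose: "(u::real^'n) \<bullet> (A *v v) = (transpose A *v u) \<bullet> v"
  by (metis dot_lmul_matrix inner_commute transpose_transpose vector_transpose_matrix)

lemma sum_mat_vec: "(\<Sum>j<(k::nat). (A j :: real^'n^'m)) *v x = (\<Sum>j<k. A j *v x)"
  by (induction k) (auto simp: matrix_vector_mult_add_rdistrib matrix_vector_mult_0)

lemma g_concave:
  fixes g g' :: "real \<Rightarrow> real"
  assumes g_cont: "continuous_on {0..} g"
    and g_deriv: "\<And>x. x > 0 \<Longrightarrow> (g has_real_derivative g' x) (at x)"
    and g'_antimono: "\<And>x y. 0 < x \<Longrightarrow> x \<le> y \<Longrightarrow> g' y \<le> g' x"
    and r: "r > 0" and s: "s \<ge> 0"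
  shows "g s \<le> g r + g' r * (s - r)"
proof (cases "s = r")
  case True then show ?thesis by simp
next
  case False
  show ?thesis
  proof (cases "s < r")
    case True
    have "continuous_on {s..r} g" using s by (intro continuous_on_subset[OF g_cont]) auto
    moreover have "\<forall>x. s < x \<and> x < r \<longrightarrow> g differentiable (at x)"
      using g_deriv s real_differentiable_def by (metis less_eq_real_def order_le_less_trans)
    ultimately obtain l z where z: "s < z" "z < r" "DERIV g z :> l" "g r - g s = (r - s) * l"
      using MVT[OF True] by blast
    have "l = g' z" using z s g_deriv[of z] DERIV_unique by force
    moreover have "g' r \<le> g' z" using z s g'_antimono[of z r] by simp
    ultimately have "(r - s) * g' r \<le> (r - s) * l" using True by (intro mult_left_mono) auto
    then show ?thesis using z by (simp add: algebra_simps)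
  next
    case False2: False
    then have sr: "r < s" using False by simp
    have "continuous_on {r..s} g" using r by (intro continuous_on_subset[OF g_cont]) auto
    moreover have "\<forall>x. r < x \<and> x < s \<longrightarrow> g differentiable (at x)"
      using g_deriv r real_differentiable_def by (metis order.strict_trans)
    ultimately obtain l z where z: "r < z" "z < s" "DERIV g z :> l" "g s - g r = (s - r) * l"
      using MVT[OF sr] by blast
    have "l = g' z" using z r g_deriv[of z] DERIV_unique by force
    moreover have "g' z \<le> g' r" using z r g'_antimono[of r z] by simp
    ultimately have "(s - r) * l \<le> (s - r) * g' r" using sr by (intro mult_left_mono) auto
    then show ?thesis using z by (simp add: algebra_simps)
  qed
qed

lemma small_t:
  fixes A B C :: real
  assumes "C \<ge> 0" "\<And>t. 0 < t \<Longrightarrow> t \<le> 1 \<Longrightarrow> A \<le> B + t * C"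
  shows "A \<le> B"
proof (rule ccontr)
  assume "\<not> A \<le> B"
  define t where "t = min 1 ((A - B) / (2 * (C + 1)))"
  have t: "0 < t" "t \<le> 1" using \<open>\<not> A \<le> B\<close> assms(1) by (auto simp: t_def)
  have "t * C \<le> (A - B) / (2 * (C + 1)) * C"
    using assms(1) by (intro mult_right_mono) (auto simp: t_def)
  also have "\<dots> < A - B"
  proof -
    have "C / (2 * (C + 1)) < 1" using assms(1) by (simp add: field_simps)
    then have "(A - B) * (C / (2 * (C + 1))) < (A - B) * 1"
      using \<open>\<not> A \<le> B\<close> by (intro mult_strict_left_mono) auto
    then show ?thesis by simp
  qed
  finally show False using assms(2)[OF t] by simp
qed

lemma alg_eq:
  fixes n u B2 S1 S2 :: real
  assumes "n > 0" "0 < u" "u < 1"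
  shows "(1 / n) * (B2 / (4 * u * (1 - u)) + (S1 - S2) / (1 - u))
    = 1 / (4 * u * (1 - u) * n) * B2 + (1 / n) * (S1 / (1 - u)) - (1 / n) * (S2 / (1 - u))"
proof -
  have "(S1 - S2) / (1 - u) = S1 / (1 - u) - S2 / (1 - u)" by (rule diff_divide_distrib)
  moreover have "(1 / n) * (B2 / (4 * u * (1 - u))) = 1 / (4 * u * (1 - u) * n) * B2" by simp
  ultimately show ?thesis by (simp only: right_diff_distrib distrib_left)
qed

lemma vec_sum_mat: "(A :: real^'n^'m) *v (\<Sum>j<(k::nat). f j) = (\<Sum>j<k. A *v f j)"
  by (induction k) (auto simp: matrix_vector_right_distrib matrix_vector_mult_0_right)

theorem theorem1:
  fixes X :: "real ^ 'p ^ 'n" and Y eps :: "real ^ 'n" and \<beta>star \<beta>hat :: "real ^ 'p"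
    and g g' :: "real \<Rightarrow> real"
    and k :: nat and M P :: "nat \<Rightarrow> real ^ 'p ^ 'p" and q :: "nat \<Rightarrow> real"
    and c lam :: "nat \<Rightarrow> real"
  defines "D \<equiv> (\<lambda>j. lq_dual_norm (q j) (transpose (X ** P j ** pinv (M j)) *v eps))"
  assumes model: "Y = X *v \<beta>star + eps"
    and g_nonneg: "\<And>x. g x \<ge> 0"
    and g0: "g 0 = 0"
    and g_cont: "continuous_on {0..} g"
    and g_mono: "strict_mono_on {0..} g"
    and g_deriv: "\<And>x. x > 0 \<Longrightarrow> (g has_real_derivative g' x) (at x)"
    and g'_cont: "continuous_on {0<..} g'"
    and g'_pos: "\<And>x. x > 0 \<Longrightarrow> g' x > 0"
    and g'_antimono: "\<And>x y. 0 < x \<Longrightarrow> x \<le> y \<Longrightarrow> g' y \<le> g' x"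
    and g_strict_convex: "strict_convex_on UNIV (\<lambda>\<alpha>::real ^ 'n. g ((norm \<alpha>)\<^sup>2))"
    and k_pos: "k \<ge> 1"
    and ker: "\<And>x. (\<forall>j<k. M j *v x = 0) \<Longrightarrow> x = 0"
    and q_ge: "\<And>j. j < k \<Longrightarrow> q j \<ge> 1"
    and P_proj: "\<And>j. j < k \<Longrightarrow> P j ** P j = P j"
    and P_sum: "(\<Sum>j<k. P j ** pinv (M j) ** M j) = mat 1"
    and noise_Y: "Y \<noteq> 0"
    and noise_D: "\<And>j. j < k \<Longrightarrow> D j > 0"
    and c_pos: "\<And>j. j < k \<Longrightarrow> c j > 0"
    and lam_pos: "\<And>j. j < k \<Longrightarrow> lam j > 0"
    and minimizer: "\<And>\<beta>. g ((norm (Y - X *v \<beta>hat))\<^sup>2) + (\<Sum>j<k. lam j * lq_norm (q j) (M j *v \<beta>hat))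
                       \<le> g ((norm (Y - X *v \<beta>))\<^sup>2) + (\<Sum>j<k. lam j * lq_norm (q j) (M j *v \<beta>))"
    and resid_pos: "(norm (Y - X *v \<beta>hat))\<^sup>2 > 0"
    and lam_choice: "\<And>j. j < k \<Longrightarrow>
        lam j / (2 * g' ((norm (Y - X *v \<beta>hat))\<^sup>2)) = c j * D j"
  shows "\<forall>u\<in>{0<..<1::real}. \<forall>\<beta>::real ^ 'p.
     (1 / real CARD('n)) * (norm (X *v (\<beta>star - \<beta>hat)))\<^sup>2
     \<le> 1 / (4 * u * (1 - u) * real CARD('n)) * (norm (X *v (\<beta>star - \<beta>)))\<^sup>2
       + (1 / real CARD('n)) * (\<Sum>j<k. (1 + c j) / (1 - u) * D j * lq_norm (q j) (M j *v \<beta>))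
       - (1 / real CARD('n)) * (\<Sum>j<k. (c j - 1) / (1 - u) * D j * lq_norm (q j) (M j *v \<beta>hat))"
proof (intro ballI allI)
  fix u :: real and \<beta> :: "real ^ 'p"
  assume u: "u \<in> {0<..<1::real}"
  then have u0: "0 < u" and u1: "u < 1" by auto
  define e where "e = Y - X *v \<beta>hat"
  define r where "r = (norm e)\<^sup>2"
  define w where "w = g' r"
  have r: "r > 0" using resid_pos by (simp add: r_def e_def)
  have w: "w > 0" using g'_pos r by (simp add: w_def)
  define pen where "pen = (\<lambda>\<gamma>. \<Sum>j<k. lam j * lq_norm (q j) (M j *v \<gamma>))"
  define v where "v = \<beta> - \<beta>hat"
  define xv where "xv = X *v v"
  have qpos: "\<And>j. j < k \<Longrightarrow> q j > 0" using q_ge by (meson less_le_trans zero_less_one)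
  have step1: "pen \<beta>hat - pen \<beta> \<le> -2 * w * (e \<bullet> xv) + t * (w * (xv \<bullet> xv))"
    if t: "0 < t" "t \<le> 1" for t
  proof -
    define bt where "bt = \<beta>hat + t *\<^sub>R v"
    have res: "Y - X *v bt = e - t *\<^sub>R xv"
      by (simp add: bt_def e_def xv_def matrix_vector_right_distrib matrix_vector_mult_scaleR algebra_simps)
    have nrm: "(norm (e - t *\<^sub>R xv))\<^sup>2 = r - 2 * t * (e \<bullet> xv) + t\<^sup>2 * (xv \<bullet> xv)"
      unfolding r_def power2_norm_eq_inner
      by (simp add: inner_diff_left inner_diff_right inner_commute power2_eq_square algebra_simps)
    have gc: "g ((norm (e - t *\<^sub>R xv))\<^sup>2) \<le> g r + w * ((norm (e - t *\<^sub>R xv))\<^sup>2 - r)"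
      unfolding w_def by (rule g_concave[OF g_cont g_deriv g'_antimono r]) auto
    have pc: "pen bt \<le> (1 - t) * pen \<beta>hat + t * pen \<beta>"
    proof -
      have "lam j * lq_norm (q j) (M j *v bt) \<le> (1 - t) * (lam j * lq_norm (q j) (M j *v \<beta>hat))
          + t * (lam j * lq_norm (q j) (M j *v \<beta>))" if j: "j < k" for j
      proof -
        have "M j *v bt = (1 - t) *\<^sub>R (M j *v \<beta>hat) + t *\<^sub>R (M j *v \<beta>)"
          by (simp add: bt_def v_def matrix_vector_right_distrib matrix_vector_mult_scaleR
              matrix_vector_mult_diff_distrib algebra_simps)
        then have "lq_norm (q j) (M j *v bt) \<le> lq_norm (q j) ((1 - t) *\<^sub>R (M j *v \<beta>hat)) + lq_norm (q j) (t *\<^sub>R (M j *v \<beta>))"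
          using lq_triangle[OF q_ge[OF j]] by (simp only:)
        also have "\<dots> = (1 - t) * lq_norm (q j) (M j *v \<beta>hat) + t * lq_norm (q j) (M j *v \<beta>)"
          using lq_scale[OF qpos[OF j], of "1 - t" "M j *v \<beta>hat"] lq_scale[OF qpos[OF j], of t "M j *v \<beta>"] t by simp
        finally show ?thesis using lam_pos[OF j] 
          by (metis (no_types, lifting) distrib_left mult.left_commute mult_left_mono less_imp_le)
      qed
      then have "pen bt \<le> (\<Sum>j<k. (1 - t) * (lam j * lq_norm (q j) (M j *v \<beta>hat))
          + t * (lam j * lq_norm (q j) (M j *v \<beta>)))"
        unfolding pen_def by (intro sum_mono) auto
      then show ?thesis by (simp add: pen_def sum.distrib sum_distrib_left)
    qed
    have "g r + pen \<beta>hat \<le> g ((norm (e - t *\<^sub>R xv))\<^sup>2) + pen bt"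
      using minimizer[of bt] res by (simp add: pen_def r_def e_def)
    moreover have gc': "g ((norm (e - t *\<^sub>R xv))\<^sup>2) \<le> g r - 2 * (t * (w * (e \<bullet> xv))) + t * (t * (w * (xv \<bullet> xv)))"
      using gc unfolding nrm by (simp add: algebra_simps power2_eq_square)
    moreover have pc': "pen bt \<le> pen \<beta>hat - t * pen \<beta>hat + t * pen \<beta>"
      using pc by (simp add: algebra_simps)
    ultimately have "t * pen \<beta>hat \<le> t * pen \<beta> - 2 * (t * (w * (e \<bullet> xv))) + t * (t * (w * (xv \<bullet> xv)))"
      by linarith
    then have "t * (pen \<beta>hat - pen \<beta>) \<le> t * (-2 * w * (e \<bullet> xv) + t * (w * (xv \<bullet> xv)))"
      by (simp add: algebra_simps)
    then show ?thesis using t by simp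
  qed
  have step2: "pen \<beta>hat - pen \<beta> \<le> -2 * w * (e \<bullet> xv)"
    by (rule small_t[OF _ step1]) (use w in auto)
  define a where "a = X *v (\<beta>star - \<beta>hat)"
  define b where "b = X *v (\<beta>star - \<beta>)"
  define z where "z = (\<lambda>j. transpose (X ** P j ** pinv (M j)) *v eps)"
  define N where "N = (\<lambda>j. lq_norm (q j) (M j *v \<beta>))"
  define Nh where "Nh = (\<lambda>j. lq_norm (q j) (M j *v \<beta>hat))"
  have e_eq: "e = a + eps" by (simp add: e_def a_def model matrix_vector_mult_diff_distrib)
  have xv_eq: "xv = a - b" by (simp add: xv_def a_def b_def v_def matrix_vector_mult_diff_distrib)
  have ba: "b - a = X *v (\<beta>hat - \<beta>)" by (simp add: a_def b_def matrix_vector_mult_diff_distrib)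
  have step4: "eps \<bullet> (b - a) = (\<Sum>j<k. z j \<bullet> (M j *v (\<beta>hat - \<beta>)))"
  proof -
    define d where "d = \<beta>hat - \<beta>"
    have "X *v d = X *v ((\<Sum>j<k. P j ** pinv (M j) ** M j) *v d)" using P_sum by simp
    also have "\<dots> = X *v (\<Sum>j<k. (P j ** pinv (M j) ** M j) *v d)" by (simp add: sum_mat_vec)
    also have "\<dots> = (\<Sum>j<k. X *v ((P j ** pinv (M j) ** M j) *v d))" by (rule vec_sum_mat)
    also have "\<dots> = (\<Sum>j<k. (X ** P j ** pinv (M j)) *v (M j *v d))"
      by (simp add: matrix_vector_mul_assoc matrix_mul_assoc)
    finally have "eps \<bullet> (X *v d) = (\<Sum>j<k. eps \<bullet> ((X ** P j ** pinv (M j)) *v (M j *v d)))"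
      by (simp add: inner_sum_right)
    then show ?thesis unfolding ba d_def z_def by (simp add: inner_transpose)
  qed
  have step5: "eps \<bullet> (b - a) \<le> (\<Sum>j<k. D j * (Nh j + N j))"
    unfolding step4
  proof (rule sum_mono)
    fix j assume "j \<in> {..<k}"
    then have j: "j < k" by simp
    have "z j \<bullet> (M j *v \<beta>hat) \<le> D j * Nh j"
      using lq_dual_ineq[OF qpos[OF j], of "M j *v \<beta>hat" "z j"]
      by (simp add: D_def z_def Nh_def inner_commute)
    moreover have "z j \<bullet> (- (M j *v \<beta>)) \<le> D j * N j"
      using lq_dual_ineq[OF qpos[OF j], of "- (M j *v \<beta>)" "z j"]
      by (simp add: D_def z_def N_def inner_commute lq_uminus)
    ultimately show "z j \<bullet> (M j *v (\<beta>hat - \<beta>)) \<le> D j * (Nh j + N j)"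
      by (simp add: matrix_vector_mult_diff_distrib inner_diff_right algebra_simps)
  qed
  have lam_eq: "lam j = 2 * w * (c j * D j)" if j: "j < k" for j
    using lam_choice[OF j] w by (simp add: w_def r_def e_def field_simps)
  have pen_diff: "pen \<beta>hat - pen \<beta> = 2 * w * (\<Sum>j<k. c j * D j * (Nh j - N j))"
    by (simp add: pen_def N_def Nh_def lam_eq sum_subtractf[symmetric] sum_distrib_left algebra_simps)
  define A2 where "A2 = a \<bullet> a"
  define T where "T = (\<Sum>j<k. (1 + c j) * D j * N j) - (\<Sum>j<k. (c j - 1) * D j * Nh j)"
  have exv: "e \<bullet> xv = A2 - a \<bullet> b - eps \<bullet> (b - a)"
    by (simp add: e_eq xv_eq A2_def inner_diff_right inner_add_left inner_commute algebra_simps)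
  have "2 * w * (\<Sum>j<k. c j * D j * (Nh j - N j)) \<le> 2 * w * (a \<bullet> b + eps \<bullet> (b - a) - A2)"
    using step2 pen_diff exv by (simp add: algebra_simps)
  then have s6: "(\<Sum>j<k. c j * D j * (Nh j - N j)) \<le> a \<bullet> b + eps \<bullet> (b - a) - A2"
    using w by simp
  have Teq: "T = (\<Sum>j<k. D j * (Nh j + N j)) - (\<Sum>j<k. c j * D j * (Nh j - N j))"
    by (simp add: T_def sum_subtractf[symmetric] algebra_simps)
  have key: "A2 \<le> a \<bullet> b + T" using s6 step5 Teq by simp
  define B2 where "B2 = b \<bullet> b"
  have ab: "a \<bullet> b \<le> norm a * norm b" by (rule norm_cauchy_schwarz)
  have "4 * u * (norm a * norm b) \<le> 4 * u\<^sup>2 * A2 + B2"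
  proof -
    have "0 \<le> (2 * u * norm a - norm b)\<^sup>2" by simp
    then show ?thesis unfolding A2_def B2_def power2_norm_eq_inner[symmetric]
      by (simp add: power2_eq_square algebra_simps)
  qed
  then have "4 * u * (a \<bullet> b) \<le> 4 * u\<^sup>2 * A2 + B2" using ab u0
    by (smt (verit) mult_left_mono)
  moreover have "4 * u * A2 \<le> 4 * u * (a \<bullet> b + T)" using key u0 by (intro mult_left_mono) auto
  ultimately have "4 * u * A2 \<le> 4 * u\<^sup>2 * A2 + B2 + 4 * u * T"
    by (simp add: algebra_simps)
  then have h: "(4 * u * (1 - u)) * A2 \<le> B2 + 4 * u * T"
    by (simp add: algebra_simps power2_eq_square)
  have pos: "4 * u * (1 - u) > 0" using u0 u1 by simp
  have "A2 \<le> (B2 + 4 * u * T) / (4 * u * (1 - u))"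
    using h pos by (simp add: pos_le_divide_eq mult.commute)
  also have "\<dots> = B2 / (4 * u * (1 - u)) + T / (1 - u)"
    using u0 u1 by (simp add: add_divide_distrib)
  finally have fin: "A2 \<le> B2 / (4 * u * (1 - u)) + T / (1 - u)" .
  have n: "real CARD('n) > 0" by simp
  have sum1: "(\<Sum>j<k. (1 + c j) / (1 - u) * D j * N j) = (\<Sum>j<k. (1 + c j) * D j * N j) / (1 - u)"
    by (simp add: sum_divide_distrib)
  have sum2: "(\<Sum>j<k. (c j - 1) / (1 - u) * D j * Nh j) = (\<Sum>j<k. (c j - 1) * D j * Nh j) / (1 - u)"
    by (simp add: sum_divide_distrib)
  have "(1 / real CARD('n)) * A2 \<le> (1 / real CARD('n)) * (B2 / (4 * u * (1 - u)) + T / (1 - u))"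
    using fin n by (simp add: divide_right_mono)
  also have "\<dots> = 1 / (4 * u * (1 - u) * real CARD('n)) * B2
       + (1 / real CARD('n)) * (\<Sum>j<k. (1 + c j) / (1 - u) * D j * N j)
       - (1 / real CARD('n)) * (\<Sum>j<k. (c j - 1) / (1 - u) * D j * Nh j)"
    unfolding sum1 sum2 T_def using alg_eq[of "real CARD('n)" u] n u0 u1 by simp
  finally show "(1 / real CARD('n)) * (norm (X *v (\<beta>star - \<beta>hat)))\<^sup>2
     \<le> 1 / (4 * u * (1 - u) * real CARD('n)) * (norm (X *v (\<beta>star - \<beta>)))\<^sup>2
       + (1 / real CARD('n)) * (\<Sum>j<k. (1 + c j) / (1 - u) * D j * lq_norm (q j) (M j *v \<beta>))
       - (1 / real CARD('n)) * (\<Sum>j<k. (c j - 1) / (1 - u) * D j * lq_norm (q j) (M j *v \<beta>hat))"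
    unfolding A2_def B2_def N_def Nh_def a_def b_def power2_norm_eq_inner .
qed

end
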